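(* Let $X=\{1,\dots,n\}$, let $a=(1,2,\dots,n)$ be the $n$-cycle, let $S$ be the flip $S(x,y)=(y,x)$ and $\beta(x,y)=(a^{-1}(y),a(x))$. Then $f,g\colon X\times X\to H$ ($H$ a group) is a noncommutative 2-cocycle pair for $(X,S,\beta)$ if and only if $g\equiv 1$ and, for all $x,y,z\in X$, $f(x,y)=f(a(x),a(y))$, $f(x,x)=1$ and $f(x,y)f(x\triangleright y,z)=f(x,z)f(x\triangleright z,y\triangleright z)$, where $x\triangleright y=x$ is the trivial quandle operation (so that $S(x,y)=(y,x\triangleright y)$). In particular, for $n=2$, $f$ is fully determined by $f(1,2)$.
   Context: For a bijection $\sigma\colon X\times X\to X\times X$ write $\sigma(x,y)=(\sigma^1(x,y),\sigma^2(x,y))$; for a biquandle $(X,\sigma)$, $s_\sigma\colon X\to X$ is the bijection with $\{(x,y):\sigma(x,y)=(x,y)\}=\{(x,s_\sigma(x))\}$; write $s=s_S$, $s_\beta$. Here $(X,S,\beta)$ is a virtual pair. A noncommutative 2-cocycle pair for a virtual pair $(X,S,\beta)$ with values in a group $H$ is a pair $f,g\colon X\times X\to H$ such that for all $x,y,z\in X$: (f1) $f(x,y)f(S^2(x,y),z)=f(x,S^1(y,z))f(S^2(x,S^1(y,z)),S^2(y,z))$; (f2) $f(S^1(x,y),S^1(S^2(x,y),z))=f(y,z)$; (f3) $f(x,s(x))=1$; (g1) $g(x,s_\beta(x))=1$; (g2) $g(x,y)g(\beta(x,y))=1$; (g3) $g(x,y)g(\beta^2(x,y),z)=g(x,\beta^1(y,z))g(\beta^2(x,\beta^1(y,z)),\beta^2(y,z))$;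 (g4) $g(y,z)g(\beta^2(x,\beta^1(y,z)),\beta^2(y,z))=g(x,y)g(\beta^1(x,y),\beta^1(\beta^2(x,y),z))$; (g5) $g(y,z)g(x,\beta^1(y,z))=g(\beta^2(x,y),z)g(\beta^1(x,y),\beta^1(\beta^2(x,y),z))$; (m1) $g(y,z)=g(S^1(x,y),\beta^1(S^2(x,y),z))$; (m2) $g(y,z)g(x,\beta^1(y,z))=g(S^2(x,y),z)g(S^1(x,y),\beta^1(S^2(x,y),z))$; (m3) $g(x,\beta^1(y,z))f(\beta^2(x,\beta^1(y,z)),\beta^2(y,z))=f(x,y)g(S^2(x,y),z)$. *)

theory Defs
  imports "HOL-Algebra.Group"
begin

definition fix_sec :: "'a set \<Rightarrow> ('a \<times> 'a \<Rightarrow> 'a \<times> 'a) \<Rightarrow> 'a \<Rightarrow> 'a" where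
  "fix_sec X \<sigma> x = (THE y. y \<in> X \<and> \<sigma> (x, y) = (x, y))"

definition nc_cocycle_pair ::
  "('h, 'm) monoid_scheme \<Rightarrow> 'a set \<Rightarrow> ('a \<times> 'a \<Rightarrow> 'a \<times> 'a) \<Rightarrow> ('a \<times> 'a \<Rightarrow> 'a \<times> 'a)
   \<Rightarrow> ('a \<Rightarrow> 'a \<Rightarrow> 'h) \<Rightarrow> ('a \<Rightarrow> 'a \<Rightarrow> 'h) \<Rightarrow> bool" where
  "nc_cocycle_pair H X S \<beta> f g \<longleftrightarrow>
    (\<forall>x\<in>X. \<forall>y\<in>X. f x y \<in> carrier H \<and> g x y \<in> carrier H) \<and>
    (\<forall>x\<in>X. \<forall>y\<in>X. \<forall>z\<in>X.
      \<comment> \<open>(f1)\<close>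
      f x y \<otimes>\<^bsub>H\<^esub> f (snd (S (x, y))) z =
        f x (fst (S (y, z))) \<otimes>\<^bsub>H\<^esub> f (snd (S (x, fst (S (y, z))))) (snd (S (y, z))) \<and>
      \<comment> \<open>(f2)\<close>
      f (fst (S (x, y))) (fst (S (snd (S (x, y)), z))) = f y z \<and>
      \<comment> \<open>(g3)\<close>
      g x y \<otimes>\<^bsub>H\<^esub> g (snd (\<beta> (x, y))) z =
        g x (fst (\<beta> (y, z))) \<otimes>\<^bsub>H\<^esub> g (snd (\<beta> (x, fst (\<beta> (y, z))))) (snd (\<beta> (y, z))) \<and>
      \<comment> \<open>(g4)\<close>
      g y z \<otimes>\<^bsub>H\<^esub> g (snd (\<beta> (x, fst (\<beta> (y, z))))) (snd (\<beta> (y, z))) =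
        g x y \<otimes>\<^bsub>H\<^esub> g (fst (\<beta> (x, y))) (fst (\<beta> (snd (\<beta> (x, y)), z))) \<and>
      \<comment> \<open>(g5)\<close>
      g y z \<otimes>\<^bsub>H\<^esub> g x (fst (\<beta> (y, z))) =
        g (snd (\<beta> (x, y))) z \<otimes>\<^bsub>H\<^esub> g (fst (\<beta> (x, y))) (fst (\<beta> (snd (\<beta> (x, y)), z))) \<and>
      \<comment> \<open>(m1)\<close>
      g y z = g (fst (S (x, y))) (fst (\<beta> (snd (S (x, y)), z))) \<and>
      \<comment> \<open>(m2)\<close>
      g y z \<otimes>\<^bsub>H\<^esub> g x (fst (\<beta> (y, z))) =
        g (snd (S (x, y))) z \<otimes>\<^bsub>H\<^esub> g (fst (S (x, y))) (fst (\<beta> (snd (S (x, y)), z))) \<and>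
      \<comment> \<open>(m3)\<close>
      g x (fst (\<beta> (y, z))) \<otimes>\<^bsub>H\<^esub> f (snd (\<beta> (x, fst (\<beta> (y, z))))) (snd (\<beta> (y, z))) =
        f x y \<otimes>\<^bsub>H\<^esub> g (snd (S (x, y))) z) \<and>
    \<comment> \<open>(f3), (g1)\<close>
    (\<forall>x\<in>X. f x (fix_sec X S x) = \<one>\<^bsub>H\<^esub> \<and> g x (fix_sec X \<beta> x) = \<one>\<^bsub>H\<^esub>) \<and>
    \<comment> \<open>(g2)\<close>
    (\<forall>x\<in>X. \<forall>y\<in>X. g x y \<otimes>\<^bsub>H\<^esub> g (fst (\<beta> (x, y))) (snd (\<beta> (x, y))) = \<one>\<^bsub>H\<^esub>)"

definition cyc :: "nat \<Rightarrow> nat \<Rightarrow> nat" where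
  "cyc n x = (if x = n then 1 else x + 1)"

definition cyc_inv :: "nat \<Rightarrow> nat \<Rightarrow> nat" where
  "cyc_inv n x = (if x = 1 then n else x - 1)"

definition flip :: "'a \<times> 'a \<Rightarrow> 'a \<times> 'a" where
  "flip p = (snd p, fst p)"

definition beta_cyc :: "nat \<Rightarrow> nat \<times> nat \<Rightarrow> nat \<times> nat" where
  "beta_cyc n p = (cyc_inv n (snd p), cyc n (fst p))"

definition triv_op :: "'a \<Rightarrow> 'a \<Rightarrow> 'a" (infixl "\<triangleright>" 70) where
  "x \<triangleright> y = x"

end

theory Submission
  imports Defs
begin

lemma cyc_in: "x \<in> {1..n} \<Longrightarrow> cyc n x \<in> {1..(n::nat)}"
  by (auto simp: cyc_def)

lemma cyc_inv_in: "x \<in> {1..n} \<Longrightarrow> cyc_inv n x \<in> {1..(n::nat)}"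
  by (auto simp: cyc_inv_def)

lemma cyc_inv_cyc: "x \<in> {1..n} \<Longrightarrow> cyc_inv n (cyc n x) = x"
  by (auto simp: cyc_def cyc_inv_def)

lemma cyc_b: "Suc 0 \<le> x \<Longrightarrow> x \<le> n \<Longrightarrow> Suc 0 \<le> cyc n x" "Suc 0 \<le> x \<Longrightarrow> x \<le> n \<Longrightarrow> cyc n x \<le> n"
  "Suc 0 \<le> x \<Longrightarrow> x \<le> n \<Longrightarrow> Suc 0 \<le> cyc_inv n x" "Suc 0 \<le> x \<Longrightarrow> x \<le> n \<Longrightarrow> cyc_inv n x \<le> n"
  by (auto simp: cyc_def cyc_inv_def)

lemma fix_flip: assumes "x \<in> X" shows "fix_sec X flip x = x"
  unfolding fix_sec_def
proof (rule the_equality)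
  show "x \<in> X \<and> flip (x, x) = (x, x)" using assms unfolding flip_def by simp
next
  fix y assume "y \<in> X \<and> flip (x, y) = (x, y)"
  then have "(y, x) = (x, y)" unfolding flip_def fst_conv snd_conv by (rule conjunct2)
  then show "y = x" by (metis fst_conv)
qed

lemma fix_beta: "x \<in> {1..n} \<Longrightarrow> fix_sec {1..n} (beta_cyc n) x = cyc n x"
  unfolding fix_sec_def
  by (rule the_equality) (auto simp: beta_cyc_def cyc_inv_cyc cyc_def cyc_inv_def)

lemma g_const:
  assumes "\<forall>z\<in>{1..n}. g z = g (cyc_inv n z)"
  shows "z \<in> {1..n} \<Longrightarrow> g z = g (1::nat)"
proof (induction z)
  case 0 then show ?case by simp
next
  case (Suc k)
  show ?case
  proof (cases "k = 0")
    case True then show ?thesis by simp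
  next
    case False
    then have k: "k \<in> {1..n}" using Suc.prems by auto
    have "g (Suc k) = g (cyc_inv n (Suc k))" using bspec[OF assms Suc.prems] .
    also have "\<dots> = g k" using False by (simp add: cyc_inv_def)
    finally show ?thesis using Suc.IH[OF k] by (rule trans)
  qed
qed

lemma fwd:
  fixes H :: "('h, 'm) monoid_scheme" (structure)
  assumes G: "group H" and C: "nc_cocycle_pair H {1..n} flip (beta_cyc n) f g"
  shows "(\<forall>x\<in>{1..n}. \<forall>y\<in>{1..n}. g x y = \<one>) \<and>
              (\<forall>x\<in>{1..n}. \<forall>y\<in>{1..n}. \<forall>z\<in>{1..n}.
                 f x y = f (cyc n x) (cyc n y) \<and> f x x = \<one> \<and>
                 f x y \<otimes> f (x \<triangleright> y) z = f x z \<otimes> f (x \<triangleright> z) (y \<triangleright> z))"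
proof -
  interpret group H by (rule G)
  note C' = C[unfolded nc_cocycle_pair_def]
  note D1 = conjunct1[OF C']
  note D2 = conjunct1[OF conjunct2[OF C']]
  note D3 = conjunct1[OF conjunct2[OF conjunct2[OF C']]]
  have car: "\<And>x y. x \<in> {1..n} \<Longrightarrow> y \<in> {1..n} \<Longrightarrow> f x y \<in> carrier H \<and> g x y \<in> carrier H"
    using D1 by simp
  have m1: "\<And>x y z. x \<in> {1..n} \<Longrightarrow> y \<in> {1..n} \<Longrightarrow> z \<in> {1..n} \<Longrightarrow> g y z = g y (cyc_inv n z)"
  proof -
    fix x y z assume "x \<in> {1..n}" "y \<in> {1..n}" "z \<in> {1..n}"
    note E = D2[rule_format, OF this]
    from E show "g y z = g y (cyc_inv n z)" by (simp add: flip_def beta_cyc_def)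
  qed
  have m3: "\<And>x y z. x \<in> {1..n} \<Longrightarrow> y \<in> {1..n} \<Longrightarrow> z \<in> {1..n} \<Longrightarrow>
     g x (cyc_inv n z) \<otimes> f (cyc n x) (cyc n y) = f x y \<otimes> g x z"
  proof -
    fix x y z assume "x \<in> {1..n}" "y \<in> {1..n}" "z \<in> {1..n}"
    note E = D2[rule_format, OF this]
    from E show "g x (cyc_inv n z) \<otimes> f (cyc n x) (cyc n y) = f x y \<otimes> g x z"
      by (simp add: flip_def beta_cyc_def)
  qed
  have f1: "\<And>x y z. x \<in> {1..n} \<Longrightarrow> y \<in> {1..n} \<Longrightarrow> z \<in> {1..n} \<Longrightarrow>
     f x y \<otimes> f x z = f x z \<otimes> f x y"
  proof -
    fix x y z assume "x \<in> {1..n}" "y \<in> {1..n}" "z \<in> {1..n}"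
    note E = D2[rule_format, OF this]
    from E show "f x y \<otimes> f x z = f x z \<otimes> f x y"
      by (simp add: flip_def)
  qed
  have g1: "\<And>x. x \<in> {1..n} \<Longrightarrow> g x (cyc n x) = \<one>"
  proof -
    fix x assume x: "x \<in> {1..n}"
    have "g x (fix_sec {1..n} (beta_cyc n) x) = \<one>" using D3[rule_format, OF x] by (rule conjunct2)
    then show "g x (cyc n x) = \<one>" by (simp only: fix_beta[OF x])
  qed
  have f3: "\<And>x. x \<in> {1..n} \<Longrightarrow> f x x = \<one>"
  proof -
    fix x assume x: "x \<in> {1..n}"
    have "f x (fix_sec {1..n} flip x) = \<one>" using D3[rule_format, OF x] by (rule conjunct1)
    then show "f x x = \<one>" by (simp only: fix_flip[OF x])
  qed
  have gone: "\<forall>x\<in>{1..n}. \<forall>y\<in>{1..n}. g x y = \<one>"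
  proof (intro ballI)
    fix x y assume x: "x \<in> {1..n}" and y: "y \<in> {1..n}"
    have h: "\<forall>z\<in>{1..n}. g x z = g x (cyc_inv n z)" using m1 x by blast
    have "g x y = g x 1" using g_const[OF h y] .
    also have "\<dots> = g x (cyc n x)" using g_const[OF h cyc_in[OF x]] by (rule sym)
    finally show "g x y = \<one>" using g1 x by simp
  qed
  have inv: "\<And>x y. x \<in> {1..n} \<Longrightarrow> y \<in> {1..n} \<Longrightarrow> f x y = f (cyc n x) (cyc n y)"
  proof -
    fix x y assume x: "x \<in> {1..n}" and y: "y \<in> {1..n}"
    have "g x (cyc_inv n x) \<otimes> f (cyc n x) (cyc n y) = f x y \<otimes> g x x" using m3 x y by blast
    then show "f x y = f (cyc n x) (cyc n y)"
      using gone x y cyc_inv_in[OF x] car cyc_in[OF x] cyc_in[OF y] by simp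
  qed
  have "\<forall>x\<in>{1..n}. \<forall>y\<in>{1..n}. \<forall>z\<in>{1..n}.
                 f x y = f (cyc n x) (cyc n y) \<and> f x x = \<one> \<and>
                 f x y \<otimes> f (x \<triangleright> y) z = f x z \<otimes> f (x \<triangleright> z) (y \<triangleright> z)"
  proof (intro ballI conjI)
    fix x y z assume x: "x \<in> {1..n}" and y: "y \<in> {1..n}" and z: "z \<in> {1..n}"
    show "f x y = f (cyc n x) (cyc n y)" using x y by (rule inv)
    show "f x x = \<one>" using x by (rule f3)
    show "f x y \<otimes> f (x \<triangleright> y) z = f x z \<otimes> f (x \<triangleright> z) (y \<triangleright> z)"
      unfolding triv_op_def using x y z by (rule f1)
  qed
  with gone show ?thesis by (rule conjI)
qed

lemma bwd:
  fixes H :: "('h, 'm) monoid_scheme" (structure)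
  assumes G: "group H"
    and car: "\<forall>x\<in>{1..n}. \<forall>y\<in>{1..n}. f x y \<in> carrier H \<and> g x y \<in> carrier H"
    and gone: "\<forall>x\<in>{1..n}. \<forall>y\<in>{1..n}. g x y = \<one>"
    and F: "\<forall>x\<in>{1..n}. \<forall>y\<in>{1..n}. \<forall>z\<in>{1..n}.
                 f x y = f (cyc n x) (cyc n y) \<and> f x x = \<one> \<and>
                 f x y \<otimes> f (x \<triangleright> y) z = f x z \<otimes> f (x \<triangleright> z) (y \<triangleright> z)"
  shows "nc_cocycle_pair H {1..n} flip (beta_cyc n) f g"
proof -
  interpret group H by (rule G)
  have inv: "\<And>x y. x \<in> {1..n} \<Longrightarrow> y \<in> {1..n} \<Longrightarrow> f x y = f (cyc n x) (cyc n y)"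
    using F by blast
  have f3: "\<And>x. x \<in> {1..n} \<Longrightarrow> f x x = \<one>" using F by blast
  have f1: "\<And>x y z. x \<in> {1..n} \<Longrightarrow> y \<in> {1..n} \<Longrightarrow> z \<in> {1..n} \<Longrightarrow>
     f x y \<otimes> f x z = f x z \<otimes> f x y"
    using F unfolding triv_op_def by blast
  have gone': "\<And>x y. Suc 0 \<le> x \<Longrightarrow> x \<le> n \<Longrightarrow> Suc 0 \<le> y \<Longrightarrow> y \<le> n \<Longrightarrow> g x y = \<one>"
    using gone by auto
  have car': "\<And>x y. Suc 0 \<le> x \<Longrightarrow> x \<le> n \<Longrightarrow> Suc 0 \<le> y \<Longrightarrow> y \<le> n \<Longrightarrow> f x y \<in> carrier H"
    using car by auto
  have inv': "\<And>x y. Suc 0 \<le> x \<Longrightarrow> x \<le> n \<Longrightarrow> Suc 0 \<le> y \<Longrightarrow> y \<le> n \<Longrightarrow> f (cyc n x) (cyc n y) = f x y"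
    using inv by auto
  have fb: "\<And>x. Suc 0 \<le> x \<Longrightarrow> x \<le> n \<Longrightarrow> fix_sec {Suc 0..n} (beta_cyc n) x = cyc n x"
    using fix_beta by auto
  show ?thesis
    unfolding nc_cocycle_pair_def
    apply (intro conjI ballI)
    apply (auto simp add: flip_def beta_cyc_def gone' car' cyc_b fix_flip fb f3 f1 inv')
    done
qed

theorem mainTheorem4:
  fixes H :: "('h, 'm) monoid_scheme" (structure)
    and n :: nat
  assumes "group H"
  shows "(\<forall>f g. (\<forall>x\<in>{1..n}. \<forall>y\<in>{1..n}. f x y \<in> carrier H \<and> g x y \<in> carrier H) \<longrightarrow>
            (nc_cocycle_pair H {1..n} flip (beta_cyc n) f g \<longleftrightarrow>
              (\<forall>x\<in>{1..n}. \<forall>y\<in>{1..n}. g x y = \<one>) \<and>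
              (\<forall>x\<in>{1..n}. \<forall>y\<in>{1..n}. \<forall>z\<in>{1..n}.
                 f x y = f (cyc n x) (cyc n y) \<and> f x x = \<one> \<and>
                 f x y \<otimes> f (x \<triangleright> y) z = f x z \<otimes> f (x \<triangleright> z) (y \<triangleright> z)))) \<and>
         (n = 2 \<longrightarrow> (\<forall>f g f' g'. nc_cocycle_pair H {1..n} flip (beta_cyc n) f g \<longrightarrow>
            nc_cocycle_pair H {1..n} flip (beta_cyc n) f' g' \<longrightarrow> f 1 2 = f' 1 2 \<longrightarrow>
            (\<forall>x\<in>{1..n}. \<forall>y\<in>{1..n}. f x y = f' x y)))"
proof (intro conjI allI impI)
  fix f g
  assume car: "\<forall>x\<in>{1..n}. \<forall>y\<in>{1..n}. f x y \<in> carrier H \<and> g x y \<in> carrier H"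
  show "nc_cocycle_pair H {1..n} flip (beta_cyc n) f g \<longleftrightarrow>
              (\<forall>x\<in>{1..n}. \<forall>y\<in>{1..n}. g x y = \<one>) \<and>
              (\<forall>x\<in>{1..n}. \<forall>y\<in>{1..n}. \<forall>z\<in>{1..n}.
                 f x y = f (cyc n x) (cyc n y) \<and> f x x = \<one> \<and>
                 f x y \<otimes> f (x \<triangleright> y) z = f x z \<otimes> f (x \<triangleright> z) (y \<triangleright> z))"
    using fwd[OF assms] bwd[OF assms car] by blast
next
  fix f g f' g'
  assume n: "n = 2" and C: "nc_cocycle_pair H {1..n} flip (beta_cyc n) f g"
    and C': "nc_cocycle_pair H {1..n} flip (beta_cyc n) f' g'" and e: "f 1 2 = f' 1 2"
  have A: "\<forall>x\<in>{1..2}. \<forall>y\<in>{1..2}. \<forall>z\<in>{1..2::nat}. f x y = f (cyc 2 x) (cyc 2 y) \<and> f x x = \<one>"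
    using fwd[OF assms C] n by blast
  have B: "\<forall>x\<in>{1..2}. \<forall>y\<in>{1..2}. \<forall>z\<in>{1..2::nat}. f' x y = f' (cyc 2 x) (cyc 2 y) \<and> f' x x = \<one>"
    using fwd[OF assms C'] n by blast
  have s: "{1..2::nat} = {1,2}" by auto
  show "\<forall>x\<in>{1..n}. \<forall>y\<in>{1..n}. f x y = f' x y"
  proof (intro ballI)
    fix x y assume x: "x \<in> {1..n}" and y: "y \<in> {1..n}"
    have c1: "cyc 2 1 = 2" "cyc 2 2 = (1::nat)" by (auto simp: cyc_def)
    have i1: "(1::nat) \<in> {1..2}" and i2: "(2::nat) \<in> {1..2}" by auto
    have a: "f 1 1 = \<one>" "f 2 2 = \<one>" "f 1 2 = f 2 1"
      using A[rule_format, OF i1 i1 i1] A[rule_format, OF i2 i2 i1] A[rule_format, OF i1 i2 i1]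
      unfolding c1 by blast+
    have b: "f' 1 1 = \<one>" "f' 2 2 = \<one>" "f' 1 2 = f' 2 1"
      using B[rule_format, OF i1 i1 i1] B[rule_format, OF i2 i2 i1] B[rule_format, OF i1 i2 i1]
      unfolding c1 by blast+
    have "x = 1 \<or> x = 2" "y = 1 \<or> y = 2" using x y n by auto
    then show "f x y = f' x y" using a b e by (elim disjE) simp_all
  qed
qed

end
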